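(* Under the standing setup, $e(U)\geq 4$; in particular $G^\ast[U]$ has at least one non-trivial component.
   Context: Standing setup: Let $m\geq 88$. Let $\mathcal{G}(m,F_6)$ be the set of $F_6$-free graphs with exactly $m$ edges and no isolated vertices, where $F_6=K_1\vee P_5$ (a vertex joined to every vertex of a path on 5 vertices). Let $G^\ast\in\mathcal{G}(m,F_6)$ have the maximum spectral radius among all graphs in $\mathcal{G}(m,F_6)$; $G^\ast$ is connected. Let $\lambda=\lambda(G^\ast)$ be its spectral radius and $\mathbf{x}$ its Perron vector (positive unit eigenvector for $\lambda$), with entry $x_v$ at vertex $v$. Let $u^\ast$ be a vertex with $x_{u^\ast}=\max_v x_v$. Set $U=N_{G^\ast}(u^\ast)$ and $W=V(G^\ast)\setminus N_{G^\ast}[u^\ast]$. For $X,Y\subseteq V(G^\ast)$, $e(X,Y)$ is the number of edges with one end in $X$ and the other in $Y$, and $e(X)$ is the number of edges inside $X$. *)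

theory Defs
  imports Complex_Main
begin

definition simple_graph :: "'a set \<Rightarrow> ('a \<Rightarrow> 'a \<Rightarrow> bool) \<Rightarrow> bool" where
  "simple_graph V E \<longleftrightarrow> finite V \<and> (\<forall>u v. E u v \<longrightarrow> u \<in> V \<and> v \<in> V)
     \<and> (\<forall>u v. E u v \<longrightarrow> E v u) \<and> (\<forall>v. \<not> E v v)"

definition edges_in :: "('a \<Rightarrow> 'a \<Rightarrow> bool) \<Rightarrow> 'a set \<Rightarrow> 'a set set" where
  "edges_in E X = {{u, v} | u v. u \<in> X \<and> v \<in> X \<and> E u v}"

definition e_in :: "('a \<Rightarrow> 'a \<Rightarrow> bool) \<Rightarrow> 'a set \<Rightarrow> nat" where
  "e_in E X = card (edges_in E X)"

definition num_edges :: "'a set \<Rightarrow> ('a \<Rightarrow> 'a \<Rightarrow> bool) \<Rightarrow> nat" where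
  "num_edges V E = e_in E V"

definition no_isolated :: "'a set \<Rightarrow> ('a \<Rightarrow> 'a \<Rightarrow> bool) \<Rightarrow> bool" where
  "no_isolated V E \<longleftrightarrow> (\<forall>v\<in>V. \<exists>w. E v w)"

definition connected_graph :: "'a set \<Rightarrow> ('a \<Rightarrow> 'a \<Rightarrow> bool) \<Rightarrow> bool" where
  "connected_graph V E \<longleftrightarrow> V \<noteq> {} \<and> (\<forall>u\<in>V. \<forall>v\<in>V. E\<^sup>*\<^sup>* u v)"

definition neighbourhood :: "('a \<Rightarrow> 'a \<Rightarrow> bool) \<Rightarrow> 'a \<Rightarrow> 'a set" where
  "neighbourhood E v = {w. E v w}"

definition contains_subgraph ::
  "'a set \<Rightarrow> ('a \<Rightarrow> 'a \<Rightarrow> bool) \<Rightarrow> 'b set \<Rightarrow> ('b \<Rightarrow> 'b \<Rightarrow> bool) \<Rightarrow> bool" where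
  "contains_subgraph VG EG VH EH \<longleftrightarrow>
     (\<exists>f. inj_on f VH \<and> f ` VH \<subseteq> VG \<and> (\<forall>u\<in>VH. \<forall>v\<in>VH. EH u v \<longrightarrow> EG (f u) (f v)))"

text \<open>F_6 = K_1 join P_5: vertex 0 joined to every vertex of the path 1-2-3-4-5.\<close>
definition F6_V :: "nat set" where "F6_V = {0..5}"

definition F6_E :: "nat \<Rightarrow> nat \<Rightarrow> bool" where
  "F6_E u v \<longleftrightarrow> u \<in> F6_V \<and> v \<in> F6_V \<and> u \<noteq> v \<and>
     (u = 0 \<or> v = 0 \<or> (u \<ge> 1 \<and> v \<ge> 1 \<and> (v = u + 1 \<or> u = v + 1)))"

definition F6_free :: "'a set \<Rightarrow> ('a \<Rightarrow> 'a \<Rightarrow> bool) \<Rightarrow> bool" where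
  "F6_free V E \<longleftrightarrow> \<not> contains_subgraph V E F6_V F6_E"

definition in_GmF6 :: "nat \<Rightarrow> 'a set \<Rightarrow> ('a \<Rightarrow> 'a \<Rightarrow> bool) \<Rightarrow> bool" where
  "in_GmF6 m V E \<longleftrightarrow> simple_graph V E \<and> F6_free V E \<and> num_edges V E = m \<and> no_isolated V E"

definition adj_eigvec :: "'a set \<Rightarrow> ('a \<Rightarrow> 'a \<Rightarrow> bool) \<Rightarrow> real \<Rightarrow> ('a \<Rightarrow> real) \<Rightarrow> bool" where
  "adj_eigvec V E \<mu> x \<longleftrightarrow> (\<forall>v. v \<notin> V \<longrightarrow> x v = 0) \<and> (\<exists>v\<in>V. x v \<noteq> 0) \<and>
     (\<forall>v\<in>V. (\<Sum>w\<in>V. if E v w then x w else 0) = \<mu> * x v)"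

definition adj_eigval :: "'a set \<Rightarrow> ('a \<Rightarrow> 'a \<Rightarrow> bool) \<Rightarrow> real \<Rightarrow> bool" where
  "adj_eigval V E \<mu> \<longleftrightarrow> (\<exists>x. adj_eigvec V E \<mu> x)"

text \<open>Spectral radius lambda(G): the largest modulus of an eigenvalue of A(G)
(A(G) is real symmetric, so all its eigenvalues are real).\<close>
definition spectral_radius_graph :: "'a set \<Rightarrow> ('a \<Rightarrow> 'a \<Rightarrow> bool) \<Rightarrow> real" where
  "spectral_radius_graph V E = Max {\<bar>\<mu>\<bar> | \<mu>. adj_eigval V E \<mu>}"

definition perron_vector :: "'a set \<Rightarrow> ('a \<Rightarrow> 'a \<Rightarrow> bool) \<Rightarrow> ('a \<Rightarrow> real) \<Rightarrow> bool" where
  "perron_vector V E x \<longleftrightarrow> adj_eigvec V E (spectral_radius_graph V E) x \<and>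
     (\<forall>v\<in>V. x v > 0) \<and> (\<Sum>v\<in>V. (x v)\<^sup>2) = 1"

end

theory Submission
  imports Defs "Jordan_Normal_Form.Char_Poly"
begin


lemma handshake:
  assumes fin: "finite X" and sym: "\<And>u v. E u v \<Longrightarrow> E v u" and irr: "\<And>v. \<not> E v v"
  shows "2 * e_in E X = (\<Sum>u\<in>X. card {w\<in>X. E u w})"
proof -
  define P where "P = {p \<in> X \<times> X. E (fst p) (snd p)}"
  define f where "f = (\<lambda>p::'a\<times>'a. {fst p, snd p})"
  have finP: "finite P" using fin unfolding P_def by auto
  have img: "edges_in E X = f ` P"
    unfolding edges_in_def P_def f_def
  proof (rule Set.set_eqI, rule iffI)
    fix e assume "e \<in> {{u, v} |u v. u \<in> X \<and> v \<in> X \<and> E u v}"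
    then obtain u v where "e = {u,v}" "u \<in> X" "v \<in> X" "E u v" by blast
    then show "e \<in> (\<lambda>p. {fst p, snd p}) ` {p \<in> X \<times> X. E (fst p) (snd p)}"
      by (intro image_eqI[of _ _ "(u,v)"]) auto
  next
    fix e assume "e \<in> (\<lambda>p. {fst p, snd p}) ` {p \<in> X \<times> X. E (fst p) (snd p)}"
    then obtain p where "p \<in> X \<times> X" "E (fst p) (snd p)" "e = {fst p, snd p}" by blast
    then show "e \<in> {{u, v} |u v. u \<in> X \<and> v \<in> X \<and> E u v}" by (cases p) auto
  qed
  have PS: "P = Sigma X (\<lambda>u. {w\<in>X. E u w})" unfolding P_def by auto
  have c1: "card P = (\<Sum>u\<in>X. card {w\<in>X. E u w})"
    unfolding PS using fin by (simp add: card_SigmaI)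
  have fib: "card {p\<in>P. f p = e} = 2" if eP: "e \<in> f ` P" for e
  proof -
    obtain u v where uv: "(u,v) \<in> P" "e = {u,v}" using eP unfolding f_def by force
    have neq: "u \<noteq> v" using uv irr unfolding P_def by auto
    have "{p\<in>P. f p = e} = {(u,v),(v,u)}"
      using uv sym unfolding P_def f_def by (auto simp: doubleton_eq_iff)
    then show ?thesis using neq by simp
  qed
  have "card P = (\<Sum>p\<in>P. (1::nat))" by (rule card_eq_sum)
  also have "\<dots> = (\<Sum>e\<in>f ` P. \<Sum>p\<in>{x. x \<in> P \<and> f x = e}. (1::nat))" by (rule sum.image_gen[OF finP])
  also have "\<dots> = (\<Sum>e\<in>f ` P. card {p\<in>P. f p = e})" by simp
  also have "\<dots> = (\<Sum>e\<in>f ` P. 2)" using fib by simp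
  also have "\<dots> = 2 * card (f ` P)" by simp
  finally show ?thesis using c1 img unfolding e_in_def by simp
qed

lemma card_ind: "finite A \<Longrightarrow> card {x\<in>A. P x} = (\<Sum>x\<in>A. if P x then 1 else 0)"
  by (simp add: sum.inter_filter[symmetric])

lemma deg_bound:
  assumes fin: "finite V" and inV: "\<And>u v. E u v \<Longrightarrow> u \<in> V \<and> v \<in> V"
    and sym: "\<And>u v. E u v \<Longrightarrow> E v u" and irr: "\<And>v. \<not> E v v" and UV: "U \<subseteq> V"
  shows "(\<Sum>u\<in>U. card {w\<in>V. E u w}) \<le> e_in E V + e_in E U"
proof -
  have finU: "finite U" using fin UV finite_subset by auto
  have d1: "card {w\<in>V. E u w} = card {w\<in>U. E u w} + card {w\<in>V-U. E u w}" for u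
  proof -
    have "{w\<in>V. E u w} = {w\<in>U. E u w} \<union> {w\<in>V-U. E u w}" using UV by auto
    moreover have "finite {w\<in>U. E u w}" "finite {w\<in>V-U. E u w}" using finU fin by auto
    moreover have "{w\<in>U. E u w} \<inter> {w\<in>V-U. E u w} = {}" by auto
    ultimately show ?thesis by (metis card_Un_disjoint)
  qed
  define c where "c = (\<Sum>u\<in>U. card {w\<in>V-U. E u w})"
  have swap: "c = (\<Sum>w\<in>V-U. card {u\<in>U. E w u})"
  proof -
    have "c = (\<Sum>u\<in>U. \<Sum>w\<in>V-U. if E u w then 1 else 0)"
      unfolding c_def by (intro sum.cong refl card_ind) (use fin in auto)
    also have "\<dots> = (\<Sum>w\<in>V-U. \<Sum>u\<in>U. if E u w then 1 else 0)" by (rule sum.swap)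
    also have "\<dots> = (\<Sum>w\<in>V-U. \<Sum>u\<in>U. if E w u then 1 else 0)"
      by (intro sum.cong refl) (use sym in auto)
    also have "\<dots> = (\<Sum>w\<in>V-U. card {u\<in>U. E w u})" by (intro sum.cong refl card_ind[symmetric] finU)
    finally show ?thesis .
  qed
  have ge: "(\<Sum>w\<in>V-U. card {u\<in>U. E w u}) \<le> (\<Sum>w\<in>V-U. card {u\<in>V. E w u})"
    by (intro sum_mono card_mono) (use fin UV in auto)
  have hV: "2 * e_in E V = (\<Sum>u\<in>V. card {w\<in>V. E u w})" by (rule handshake[OF fin sym irr])
  have hU: "2 * e_in E U = (\<Sum>u\<in>U. card {w\<in>U. E u w})" by (rule handshake[OF finU sym irr])
  have split: "(\<Sum>u\<in>V. card {w\<in>V. E u w}) = (\<Sum>u\<in>U. card {w\<in>V. E u w}) + (\<Sum>u\<in>V-U. card {w\<in>V. E u w})"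
    using sum.subset_diff[OF UV fin, of "\<lambda>u. card {w\<in>V. E u w}"] by linarith
  have sU: "(\<Sum>u\<in>U. card {w\<in>V. E u w}) = 2 * e_in E U + c"
    unfolding c_def hU d1 by (simp add: sum.distrib)
  show ?thesis using hV split sU swap ge by linarith
qed



lemma eigvals_finite:
  fixes EW :: "nat \<Rightarrow> nat \<Rightarrow> bool"
  shows "finite {\<nu>. adj_eigval {0..<N} EW \<nu>}"
proof -
  define A :: "real mat" where "A = mat N N (\<lambda>(i,j). if EW i j then 1 else 0)"
  have Ac: "A \<in> carrier_mat N N" unfolding A_def by simp
  have sub: "{\<nu>. adj_eigval {0..<N} EW \<nu>} \<subseteq> {\<nu>. poly (char_poly A) \<nu> = 0}"
  proof
    fix \<nu> assume "\<nu> \<in> {\<nu>. adj_eigval {0..<N} EW \<nu>}"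
    then obtain y where y: "adj_eigvec {0..<N} EW \<nu> y" unfolding adj_eigval_def by auto
    define v where "v = vec N y"
    have "eigenvector A v \<nu>"
      unfolding eigenvector_def
    proof (intro conjI)
      show "v \<in> carrier_vec (dim_row A)" unfolding v_def A_def by simp
      obtain i where "i < N" "y i \<noteq> 0" using y unfolding adj_eigvec_def by auto
      then have "v $ i \<noteq> 0" unfolding v_def by simp
      then show "v \<noteq> 0\<^sub>v (dim_row A)" using \<open>i < N\<close> unfolding A_def by auto
      show "A *\<^sub>v v = \<nu> \<cdot>\<^sub>v v"
      proof (rule eq_vecI)
        fix i assume "i < dim_vec (\<nu> \<cdot>\<^sub>v v)"
        then have i: "i < N" unfolding v_def by simp
        have "(A *\<^sub>v v) $ i = (\<Sum>j\<in>{0..<N}. (if EW i j then 1 else 0) * y j)"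
        proof -
          have "(A *\<^sub>v v) $ i = row A i \<bullet> v" using i Ac by simp
          also have "\<dots> = (\<Sum>j\<in>{0..<N}. row A i $ j * v $ j)" unfolding scalar_prod_def v_def by simp
          also have "\<dots> = (\<Sum>j\<in>{0..<N}. (if EW i j then 1 else 0) * y j)"
            by (intro sum.cong refl) (use i in \<open>simp add: A_def v_def\<close>)
          finally show ?thesis .
        qed
        also have "\<dots> = (\<Sum>j\<in>{0..<N}. if EW i j then y j else 0)"
          by (intro sum.cong) auto
        also have "\<dots> = \<nu> * y i" using y i unfolding adj_eigvec_def by auto
        finally show "(A *\<^sub>v v) $ i = (\<nu> \<cdot>\<^sub>v v) $ i" using i unfolding v_def by simp
      qed (simp add: A_def v_def)
    qed
    then have "eigenvalue A \<nu>" unfolding eigenvalue_def by auto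
    then show "\<nu> \<in> {\<nu>. poly (char_poly A) \<nu> = 0}"
      using eigenvalue_root_char_poly[OF Ac] by auto
  qed
  have "char_poly A \<noteq> 0" using degree_monic_char_poly[OF Ac] by auto
  then have "finite {\<nu>. poly (char_poly A) \<nu> = 0}" by (rule poly_roots_finite)
  then show ?thesis using sub finite_subset by auto
qed

lemma spec_ge:
  fixes EW :: "nat \<Rightarrow> nat \<Rightarrow> bool"
  assumes "adj_eigvec {0..<N} EW \<mu> x"
  shows "\<bar>\<mu>\<bar> \<le> spectral_radius_graph {0..<N} EW"
proof -
  have "{\<bar>\<mu>\<bar> | \<mu>. adj_eigval {0..<N} EW \<mu>} = abs ` {\<nu>. adj_eigval {0..<N} EW \<nu>}" by auto
  then have fin: "finite {\<bar>\<mu>\<bar> | \<mu>. adj_eigval {0..<N} EW \<mu>}" using eigvals_finite by simp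
  have "\<bar>\<mu>\<bar> \<in> {\<bar>\<mu>\<bar> | \<mu>. adj_eigval {0..<N} EW \<mu>}" using assms unfolding adj_eigval_def by auto
  then show ?thesis unfolding spectral_radius_graph_def using fin by (simp add: Max_ge)
qed



definition BW :: "nat \<Rightarrow> nat \<Rightarrow> nat \<Rightarrow> nat \<Rightarrow> bool" where
  "BW k r u v \<longleftrightarrow> u < k+2+2*r \<and> v < k+2+2*r \<and> u \<noteq> v \<and>
     ((u \<le> 1 \<and> v \<le> k+1) \<or> (v \<le> 1 \<and> u \<le> k+1) \<or> (k+2 \<le> u \<and> k+2 \<le> v))"

lemma BW_simple: "simple_graph {0..<k+2+2*r} (BW k r)"
  unfolding simple_graph_def BW_def by auto

lemma BW_noiso: "r \<le> 1 \<Longrightarrow> no_isolated {0..<k+2+2*r} (BW k r)"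
  unfolding no_isolated_def
proof
  fix v assume r: "r \<le> 1" and v: "v \<in> {0..<k+2+2*r}"
  show "\<exists>w. BW k r v w"
  proof (cases "v \<le> k+1")
    case True
    show ?thesis
    proof (cases "v = 0")
      case True then show ?thesis using v by (intro exI[of _ 1]) (auto simp: BW_def)
    next
      case False then show ?thesis using v \<open>v \<le> k+1\<close> by (intro exI[of _ 0]) (auto simp: BW_def)
    qed
  next
    case False
    then have "r = 1" using v r by auto
    show ?thesis
    proof (cases "v = k+2")
      case True then show ?thesis using v \<open>r=1\<close> by (intro exI[of _ "k+3"]) (auto simp: BW_def)
    next
      case False then show ?thesis using v \<open>r=1\<close> \<open>\<not> v \<le> k+1\<close> by (intro exI[of _ "k+2"]) (auto simp: BW_def)
    qed
  qed
qed

lemma BW_tri: "BW k r a b \<Longrightarrow> BW k r b c \<Longrightarrow> BW k r a c \<Longrightarrow> r \<le> 1 \<Longrightarrow>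
   (a = 0 \<or> b = 0 \<or> c = 0) \<and> (a = 1 \<or> b = 1 \<or> c = 1)"
proof -
  assume ab: "BW k r a b" and bc: "BW k r b c" and ac: "BW k r a c" and r: "r \<le> 1"
  have nb: "a \<noteq> b" "b \<noteq> c" "a \<noteq> c" "c < k+2+2*r" "a < k+2+2*r" "b < k+2+2*r"
    using ab bc ac unfolding BW_def by auto
  have big: "k+2 \<le> y" if "BW k r x y" "k+2 \<le> x" for x y using that unfolding BW_def by auto
  have big2: "k+2 \<le> x" if "BW k r x y" "k+2 \<le> y" for x y using that unfolding BW_def by auto
  have small: "a \<le> k+1" "b \<le> k+1" "c \<le> k+1"
  proof -
    have "\<not> (k+2 \<le> a \<and> k+2 \<le> b \<and> k+2 \<le> c)" using nb r by auto
    moreover have "k+2 \<le> a \<longleftrightarrow> k+2 \<le> b" using big big2 ab by blast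
    moreover have "k+2 \<le> b \<longleftrightarrow> k+2 \<le> c" using big big2 bc by blast
    ultimately show "a \<le> k+1" "b \<le> k+1" "c \<le> k+1" by auto
  qed
  have e: "x \<le> 1 \<or> y \<le> 1" if "BW k r x y" "x \<le> k+1" for x y using that unfolding BW_def by auto
  have "a \<le> 1 \<or> b \<le> 1" "b \<le> 1 \<or> c \<le> 1" "a \<le> 1 \<or> c \<le> 1"
    using e[OF ab small(1)] e[OF bc small(2)] e[OF ac small(1)] by auto
  then show ?thesis using nb(1-3) by presburger
qed

lemma BW_F6free: "r \<le> 1 \<Longrightarrow> F6_free {0..<k+2+2*r} (BW k r)"
  unfolding F6_free_def contains_subgraph_def
proof
  assume r: "r \<le> 1"
  assume "\<exists>f. inj_on f F6_V \<and> f ` F6_V \<subseteq> {0..<k+2+2*r} \<and> (\<forall>u\<in>F6_V. \<forall>v\<in>F6_V. F6_E u v \<longrightarrow> BW k r (f u) (f v))"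
  then obtain f where inj: "inj_on f F6_V" and ad: "\<forall>u\<in>F6_V. \<forall>v\<in>F6_V. F6_E u v \<longrightarrow> BW k r (f u) (f v)" by blast
  have V: "0 \<in> F6_V" "1 \<in> F6_V" "2 \<in> F6_V" "3 \<in> F6_V" "4 \<in> F6_V" by (auto simp: F6_V_def)
  have E: "F6_E 0 1" "F6_E 1 2" "F6_E 0 2" "F6_E 0 3" "F6_E 3 4" "F6_E 0 4" by (auto simp: F6_E_def F6_V_def)
  have t1: "(f 0 = 0 \<or> f 1 = 0 \<or> f 2 = 0) \<and> (f 0 = 1 \<or> f 1 = 1 \<or> f 2 = 1)"
    using BW_tri[OF ad[rule_format, OF V(1) V(2) E(1)] ad[rule_format, OF V(2) V(3) E(2)] ad[rule_format, OF V(1) V(3) E(3)] r] .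
  have t2: "(f 0 = 0 \<or> f 3 = 0 \<or> f 4 = 0) \<and> (f 0 = 1 \<or> f 3 = 1 \<or> f 4 = 1)"
    using BW_tri[OF ad[rule_format, OF V(1) V(4) E(4)] ad[rule_format, OF V(4) V(5) E(5)] ad[rule_format, OF V(1) V(5) E(6)] r] .
  have d: "f i \<noteq> f j" if "i \<in> F6_V" "j \<in> F6_V" "i \<noteq> j" for i j
    using inj that unfolding inj_on_def by blast
  have "f 1 \<noteq> f 3" "f 1 \<noteq> f 4" "f 2 \<noteq> f 3" "f 2 \<noteq> f 4"
    using d[OF V(2) V(4)] d[OF V(2) V(5)] d[OF V(3) V(4)] d[OF V(3) V(5)] by auto
  moreover have "f 0 \<noteq> f 1" "f 0 \<noteq> f 2" "f 0 \<noteq> f 3" "f 0 \<noteq> f 4"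
    using d[OF V(1) V(2)] d[OF V(1) V(3)] d[OF V(1) V(4)] d[OF V(1) V(5)] by auto
  ultimately show False using t1 t2 by metis
qed



lemma split3:
  fixes g :: "nat \<Rightarrow> 'b::comm_monoid_add"
  assumes "k+2 \<le> N"
  shows "sum g {0..<N} = sum g {0..<2} + sum g {2..<k+2} + sum g {k+2..<N}"
proof -
  have a: "sum g {0..<2} + sum g {2..<k+2} = sum g {0..<k+2}" by (rule sum.atLeastLessThan_concat) auto
  have b: "sum g {0..<k+2} + sum g {k+2..<N} = sum g {0..<N}" by (rule sum.atLeastLessThan_concat) (use assms in auto)
  show ?thesis using a b by (simp add: add.assoc)
qed

lemma BW_edges:
  assumes r: "r \<le> 1"
  shows "num_edges {0..<k+2+2*r} (BW k r) = 2*k+1+r"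
proof -
  let ?N = "k+2+2*r"
  let ?d = "\<lambda>u. card {w\<in>{0..<?N}. BW k r u w}"
  have hs: "2 * e_in (BW k r) {0..<?N} = (\<Sum>u\<in>{0..<?N}. ?d u)"
    by (rule handshake) (auto simp: BW_def)
  have d0: "?d 0 = k+1"
  proof -
    have "{w\<in>{0..<?N}. BW k r 0 w} = {1..k+1}" by (auto simp: BW_def)
    then show ?thesis by simp
  qed
  have d1: "?d 1 = k+1"
  proof -
    have "{w\<in>{0..<?N}. BW k r 1 w} = {0..<k+2} - {1}" by (auto simp: BW_def)
    then show ?thesis by simp
  qed
  have dp: "?d u = 2" if "u \<in> {2..<k+2}" for u
  proof -
    have "{w\<in>{0..<?N}. BW k r u w} = {0,1}" using that by (auto simp: BW_def)
    then show ?thesis by simp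
  qed
  have de: "?d u = 1" if "u \<in> {k+2..<?N}" for u
  proof -
    have r1: "r = 1" using that r by auto
    have "{w\<in>{0..<?N}. BW k r u w} = {2*k+5-u}" using that r1 by (auto simp: BW_def) presburger
    then show ?thesis by simp
  qed
  have "(\<Sum>u\<in>{0..<?N}. ?d u) = (\<Sum>u\<in>{0..<2}. ?d u) + (\<Sum>u\<in>{2..<k+2}. ?d u) + (\<Sum>u\<in>{k+2..<?N}. ?d u)"
    by (rule split3) simp
  also have "(\<Sum>u\<in>{0..<2}. ?d u) = 2*k+2"
    using d0 d1 by (simp add: numeral_2_eq_2)
  also have "(\<Sum>u\<in>{2..<k+2}. ?d u) = (\<Sum>u\<in>{2..<k+2}. 2)" by (rule sum.cong) (use dp in auto)
  also have "(\<Sum>u\<in>{k+2..<?N}. ?d u) = (\<Sum>u\<in>{k+2..<?N}. 1)" by (rule sum.cong) (use de in auto)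
  finally have "2 * e_in (BW k r) {0..<?N} = 2*k+2 + 2*k + 2*r" using hs by simp
  then show ?thesis unfolding num_edges_def by simp
qed



lemma mu_eq: "((1 + sqrt (1 + 8 * real k)) / 2)^2 = (1 + sqrt (1 + 8 * real k)) / 2 + 2 * real k"
proof -
  have s: "(sqrt (1 + 8 * real k))^2 = 1 + 8 * real k" by simp
  show ?thesis by (simp add: power2_eq_square field_simps)
qed

lemma BW_eig:
  fixes k r :: nat
  assumes r: "r \<le> 1"
  defines "\<mu> \<equiv> (1 + sqrt (1 + 8 * real k)) / 2"
  shows "adj_eigvec {0..<k+2+2*r} (BW k r) \<mu> (\<lambda>u. if u \<le> 1 then \<mu>/2 else if u \<le> k+1 then 1 else 0)"
proof -
  let ?N = "k+2+2*r"
  define xv where "xv = (\<lambda>u::nat. if u \<le> 1 then \<mu>/2 else if u \<le> k+1 then 1 else (0::real))"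
  have mupos: "\<mu> > 0" unfolding \<mu>_def by (simp add: add_pos_nonneg)
  have mu2: "\<mu> * \<mu> = \<mu> + 2 * real k" using mu_eq[of k] unfolding \<mu>_def by (simp add: power2_eq_square)
  have tot: "(\<Sum>w\<in>{0..<k+2}. xv w) = \<mu> + real k"
  proof -
    have "(\<Sum>w\<in>{0..<k+2}. xv w) = (\<Sum>w\<in>{0..<2}. xv w) + (\<Sum>w\<in>{2..<k+2}. xv w)"
      by (rule sum.atLeastLessThan_concat[symmetric]) auto
    also have "(\<Sum>w\<in>{0..<2}. xv w) = \<mu>" by (simp add: xv_def numeral_2_eq_2)
    also have "(\<Sum>w\<in>{2..<k+2}. xv w) = (\<Sum>w\<in>{2..<k+2}. 1)" by (rule sum.cong) (auto simp: xv_def)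
    finally show ?thesis by simp
  qed
  have eq: "(\<Sum>w\<in>{0..<?N}. if BW k r v w then xv w else 0) = \<mu> * xv v" if v: "v \<in> {0..<?N}" for v
  proof -
    have "(\<Sum>w\<in>{0..<?N}. if BW k r v w then xv w else 0) = (\<Sum>w\<in>{w\<in>{0..<?N}. BW k r v w}. xv w)"
      by (rule sum.inter_filter[symmetric]) simp
    also have "\<dots> = \<mu> * xv v"
    proof (cases "v \<le> 1")
      case True
      have "{w\<in>{0..<?N}. BW k r v w} = {0..<k+2} - {v}" using True by (auto simp: BW_def)
      then have "(\<Sum>w\<in>{w\<in>{0..<?N}. BW k r v w}. xv w) = (\<Sum>w\<in>{0..<k+2}. xv w) - xv v"
        using True by (simp add: sum_diff1)
      also have "\<dots> = \<mu> + real k - \<mu>/2" using tot True by (simp add: xv_def)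
      also have "\<dots> = \<mu> * xv v" using True mu2 by (simp add: xv_def field_simps)
      finally show ?thesis .
    next
      case False
      show ?thesis
      proof (cases "v \<le> k+1")
        case True
        have "{w\<in>{0..<?N}. BW k r v w} = {0,1}" using True False by (auto simp: BW_def)
        then show ?thesis using True False by (simp add: xv_def)
      next
        case F2: False
        have "(\<Sum>w\<in>{w\<in>{0..<?N}. BW k r v w}. xv w) = (\<Sum>w\<in>{w\<in>{0..<?N}. BW k r v w}. 0)"
          by (rule sum.cong) (use F2 in \<open>auto simp: BW_def xv_def\<close>)
        then show ?thesis using F2 False by (simp add: xv_def)
      qed
    qed
    finally show ?thesis .
  qed
  show ?thesis
    unfolding adj_eigvec_def xv_def[symmetric]
  proof (intro conjI allI impI ballI)
    fix v :: nat assume "v \<notin> {0..<?N}" then show "xv v = 0" by (auto simp: xv_def)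
  next
    show "\<exists>v\<in>{0..<?N}. xv v \<noteq> 0" using mupos by (intro bexI[of _ 0]) (auto simp: xv_def)
  next
    fix v assume "v \<in> {0..<?N}" then show "(\<Sum>w\<in>{0..<?N}. if BW k r v w then xv w else 0) = \<mu> * xv v" by (rule eq)
  qed
qed



theorem lemma3p1:
  fixes m :: nat and V :: "'a set" and E :: "'a \<Rightarrow> 'a \<Rightarrow> bool"
    and x :: "'a \<Rightarrow> real" and ustar :: 'a
  assumes "m \<ge> 88"
    and "in_GmF6 m V E"
    and "\<And>(W :: nat set) EW. in_GmF6 m W EW \<Longrightarrow>
           spectral_radius_graph W EW \<le> spectral_radius_graph V E"
    and "connected_graph V E"
    and "perron_vector V E x"
    and "ustar \<in> V" and "\<forall>v\<in>V. x v \<le> x ustar"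
  shows "e_in E (neighbourhood E ustar) \<ge> 4 \<and>
         (\<exists>u\<in>neighbourhood E ustar. \<exists>w\<in>neighbourhood E ustar. E u w)"
proof -
  have sg: "simple_graph V E" and me: "num_edges V E = m" using assms(2) unfolding in_GmF6_def by auto
  have fin: "finite V" and inV: "\<And>u v. E u v \<Longrightarrow> u \<in> V \<and> v \<in> V"
    and sym: "\<And>u v. E u v \<Longrightarrow> E v u" and irr: "\<And>v. \<not> E v v"
    using sg unfolding simple_graph_def by auto
  define lam where "lam = spectral_radius_graph V E"
  have ev: "adj_eigvec V E lam x" and xpos: "\<forall>v\<in>V. x v > 0"
    using assms(5) unfolding perron_vector_def lam_def by auto
  define k where "k = (m - 1) div 2"
  define r where "r = m - 1 - 2 * k"
  have r1: "r \<le> 1" and mk: "m = 2*k+1+r" and k43: "k \<ge> 43"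
    using assms(1) unfolding r_def k_def by auto
  define \<mu> where "\<mu> = (1 + sqrt (1 + 8 * real k)) / 2"
  have inW: "in_GmF6 m {0..<k+2+2*r} (BW k r)"
    unfolding in_GmF6_def using BW_simple BW_F6free[OF r1] BW_edges[OF r1] BW_noiso[OF r1] mk by auto
  have "\<bar>\<mu>\<bar> \<le> spectral_radius_graph {0..<k+2+2*r} (BW k r)"
    using spec_ge[OF BW_eig[OF r1]] unfolding \<mu>_def .
  also have "\<dots> \<le> lam" using assms(3)[OF inW] unfolding lam_def .
  finally have mul: "\<bar>\<mu>\<bar> \<le> lam" .
  have "sqrt (1 + 8 * real k) \<ge> sqrt 289" using k43 by (intro real_sqrt_le_mono) simp
  moreover have "sqrt (289::real) = 17" by (simp add: real_sqrt_eq_iff[symmetric])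
  ultimately have mu9: "\<mu> \<ge> 9" unfolding \<mu>_def by simp
  have mu2: "\<mu> * \<mu> = \<mu> + 2 * real k" using mu_eq[of k] unfolding \<mu>_def by (simp add: power2_eq_square)
  have lam: "\<mu> \<le> lam" using mul mu9 by simp
  define U where "U = neighbourhood E ustar"
  have UV: "U \<subseteq> V" unfolding U_def neighbourhood_def using inV by auto
  define xs where "xs = x ustar"
  have xs: "xs > 0" using xpos assms(6) unfolding xs_def by auto
  have eqs: "(\<Sum>w\<in>V. if E v w then x w else 0) = lam * x v" if "v \<in> V" for v
    using ev that unfolding adj_eigvec_def by auto
  have filt: "(\<Sum>w\<in>V. if E v w then f w else 0) = (\<Sum>w\<in>{w\<in>V. E v w}. f w)" for v and f :: "'a \<Rightarrow> real"
    by (rule sum.inter_filter[symmetric, OF fin])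
  have NU: "{w\<in>V. E ustar w} = U" unfolding U_def neighbourhood_def using inV by auto
  have s1: "lam * xs = (\<Sum>u\<in>U. x u)" using eqs[OF assms(6)] filt[of ustar x] NU unfolding xs_def by simp
  have s2: "lam * x u \<le> xs * real (card {w\<in>V. E u w})" if "u \<in> U" for u
  proof -
    have "lam * x u = (\<Sum>w\<in>{w\<in>V. E u w}. x w)" using eqs[of u] filt[of u x] that UV by auto
    also have "\<dots> \<le> (\<Sum>w\<in>{w\<in>V. E u w}. xs)" by (rule sum_mono) (use assms(7) in \<open>auto simp: xs_def\<close>)
    also have "\<dots> = xs * real (card {w\<in>V. E u w})" by simp
    finally show ?thesis .
  qed
  have "lam * lam * xs = (\<Sum>u\<in>U. lam * x u)" using s1 by (simp add: sum_distrib_left mult.assoc)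
  also have "\<dots> \<le> (\<Sum>u\<in>U. xs * real (card {w\<in>V. E u w}))" by (rule sum_mono) (rule s2)
  also have "\<dots> = xs * real (\<Sum>u\<in>U. card {w\<in>V. E u w})" by (simp add: sum_distrib_left)
  also have "\<dots> \<le> xs * real (e_in E V + e_in E U)"
  proof -
    have "(\<Sum>u\<in>U. card {w\<in>V. E u w}) \<le> e_in E V + e_in E U"
      by (rule deg_bound[of V E U]) (use fin inV sym irr UV in auto)
    then have "real (\<Sum>u\<in>U. card {w\<in>V. E u w}) \<le> real (e_in E V + e_in E U)" by (rule of_nat_mono)
    then show ?thesis using xs by (intro mult_left_mono) auto
  qed
  finally have "lam * lam * xs \<le> xs * real (m + e_in E U)" using me unfolding num_edges_def by simp
  then have ll: "lam * lam \<le> real m + real (e_in E U)" using xs by (simp add: mult.commute)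
  have "\<mu> * \<mu> \<le> lam * lam" using lam mu9 by (intro mult_mono) auto
  moreover have "real m = 2 * real k + 1 + real r" using mk by simp
  moreover have "real r \<le> 1" using r1 by simp
  ultimately have "real (e_in E U) > 3" using ll mu2 mu9 by linarith
  then have e4: "e_in E U \<ge> 4" by simp
  then have "edges_in E U \<noteq> {}" unfolding e_in_def by (metis card.empty not_numeral_le_zero)
  then obtain u v where "u \<in> U" "v \<in> U" "E u v" unfolding edges_in_def by auto
  then show ?thesis using e4 unfolding U_def by auto
qed


end
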